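(* Let $p\in\mathbb{T}^{\mathcal{P}([n])}$ be a tropical Wick vector. If $x\in\mathbb{T}^{\mathcal{J}}$ lies in the cocycle space $\mathcal{Q}(p)$, then $x$ lies in the tropical convex hull of the cocircuits of $p$.
   Context: $\mathbb{T}=\mathbb{R}\cup\{\infty\}$ with $\oplus=\min$, $\odot=+$; $\mathcal{P}([n])$ the set of subsets of $[n]$. A tropical Wick vector is $p$ such that for all $S,T\subseteq[n]$ the minimum $\min_{i\in S\Delta T}(p_{S\Delta\{i\}}+p_{T\Delta\{i\}})$ is attained at least twice or equals $\infty$. Let $\mathcal{J}=\{1,\dots,n,1^*,\dots,n^*\}$ with involution $i\leftrightarrow i^*$; $X\subseteq\mathcal{J}$ is admissible if $X\cap X^*=\emptyset$. For $S\subseteq[n]$ let $\bar S=S\cup\{i^*:i\in[n]\setminus S\}$ and $\bar p_{\bar S}:=p_S$. For $T\subseteq[n]$: $(c_T)_i=\bar p_{\bar T\Delta\{i,i^*\}}$ if $i\in\bar T$, $\infty$ otherwise; $(c^*_T)_i=\bar p_{\bar T\Delta\{i,i^*\}}$ if $i\notin\bar T$, $\infty$ otherwise. Circuits of $p$: $c_T+\lambda\mathbf{1}$ ($\lambda\in\mathbb{R}$) with nonempty support; cocircuits: $c^*_T+\lambda\mathbf{1}$ with nonempty support (support = coordinates $\neq\infty$). $x,y$ are tropically orthogonal if $\min_k(x_k+y_k)$ is attained at least twice or equals $\infty$. The cocycle space $\mathcal{Q}(p)$ is the set of vectors in $\mathbb{T}^{\mathcal{J}}$ with admissible support that are tropically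 orthogonal to all circuits of $p$. The tropical convex hull of a set $A$ is the set of all finite tropical linear combinations $\lambda_1\odot a_1\oplus\cdots\oplus\lambda_r\odot a_r$ with $a_k\in A$, $\lambda_k\in\mathbb{T}$. *)

theory Defs
  imports "HOL-Library.Extended_Real"
begin

text \<open>Tropical semiring T = R \<union> {\<infinity>} is modelled inside ereal (values must avoid MInfty);
  tropical addition is min, tropical multiplication is +.  The index set J = {1..n, 1*..n*} is modelled in type nat + nat:
  Inl i stands for i and Inr i stands for i*.\<close>

type_synonym idx = "nat + nat"

definition Jset :: "nat \<Rightarrow> idx set" where
  "Jset n = Inl ` {1..n} \<union> Inr ` {1..n}"

fun star :: "idx \<Rightarrow> idx" where
  "star (Inl i) = Inr i"
| "star (Inr i) = Inl i"

definition admissible :: "idx set \<Rightarrow> bool" where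
  "admissible X \<longleftrightarrow> X \<inter> star ` X = {}"

definition sdiff :: "'a set \<Rightarrow> 'a set \<Rightarrow> 'a set" where
  "sdiff A B = (A - B) \<union> (B - A)"

definition min_twice :: "'a set \<Rightarrow> ('a \<Rightarrow> ereal) \<Rightarrow> bool" where
  "min_twice I f \<longleftrightarrow> (\<forall>i\<in>I. f i = PInfty) \<or>
     (\<exists>i\<in>I. \<exists>j\<in>I. i \<noteq> j \<and> f i = f j \<and> (\<forall>k\<in>I. f i \<le> f k))"

definition trop_wick :: "nat \<Rightarrow> (nat set \<Rightarrow> ereal) \<Rightarrow> bool" where
  "trop_wick n p \<longleftrightarrow> (\<forall>S. S \<subseteq> {1..n} \<longrightarrow> p S \<noteq> MInfty) \<and>
     (\<forall>S T. S \<subseteq> {1..n} \<longrightarrow> T \<subseteq> {1..n} \<longrightarrow>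
        min_twice (sdiff S T) (\<lambda>i. p (sdiff S {i}) + p (sdiff T {i})))"

definition bar :: "nat \<Rightarrow> nat set \<Rightarrow> idx set" where
  "bar n S = Inl ` S \<union> Inr ` ({1..n} - S)"

text \<open>pbar p (bar n S) = p S\<close>
definition pbar :: "(nat set \<Rightarrow> ereal) \<Rightarrow> idx set \<Rightarrow> ereal" where
  "pbar p X = p {i. Inl i \<in> X}"

definition circ :: "nat \<Rightarrow> (nat set \<Rightarrow> ereal) \<Rightarrow> nat set \<Rightarrow> idx \<Rightarrow> ereal" where
  "circ n p T i = (if i \<in> bar n T then pbar p (sdiff (bar n T) {i, star i}) else PInfty)"

definition cocirc :: "nat \<Rightarrow> (nat set \<Rightarrow> ereal) \<Rightarrow> nat set \<Rightarrow> idx \<Rightarrow> ereal" where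
  "cocirc n p T i = (if i \<notin> bar n T then pbar p (sdiff (bar n T) {i, star i}) else PInfty)"

definition supp :: "nat \<Rightarrow> (idx \<Rightarrow> ereal) \<Rightarrow> idx set" where
  "supp n x = {k \<in> Jset n. x k \<noteq> PInfty}"

definition circuits :: "nat \<Rightarrow> (nat set \<Rightarrow> ereal) \<Rightarrow> (idx \<Rightarrow> ereal) set" where
  "circuits n p = {y. \<exists>T (l::real). T \<subseteq> {1..n} \<and> y = (\<lambda>k. circ n p T k + ereal l)
                        \<and> supp n y \<noteq> {}}"

definition cocircuits :: "nat \<Rightarrow> (nat set \<Rightarrow> ereal) \<Rightarrow> (idx \<Rightarrow> ereal) set" where
  "cocircuits n p = {y. \<exists>T (l::real). T \<subseteq> {1..n} \<and> y = (\<lambda>k. cocirc n p T k + ereal l)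
                        \<and> supp n y \<noteq> {}}"

definition trop_orth :: "nat \<Rightarrow> (idx \<Rightarrow> ereal) \<Rightarrow> (idx \<Rightarrow> ereal) \<Rightarrow> bool" where
  "trop_orth n x y \<longleftrightarrow> min_twice (Jset n) (\<lambda>k. x k + y k)"

text \<open>Vectors in T^J: coordinates on J avoid MInfty (coordinates outside J are irrelevant).\<close>
definition trop_vec :: "nat \<Rightarrow> (idx \<Rightarrow> ereal) \<Rightarrow> bool" where
  "trop_vec n x \<longleftrightarrow> (\<forall>k\<in>Jset n. x k \<noteq> MInfty)"

definition cocycle_space :: "nat \<Rightarrow> (nat set \<Rightarrow> ereal) \<Rightarrow> (idx \<Rightarrow> ereal) set" where
  "cocycle_space n p = {x. trop_vec n x \<and> admissible (supp n x) \<and>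
                           (\<forall>c\<in>circuits n p. trop_orth n x c)}"

definition trop_hull :: "nat \<Rightarrow> (idx \<Rightarrow> ereal) set \<Rightarrow> (idx \<Rightarrow> ereal) set" where
  "trop_hull n A = {x. \<exists>cs :: (ereal \<times> (idx \<Rightarrow> ereal)) list.
      (\<forall>(l, a) \<in> set cs. l \<noteq> MInfty \<and> a \<in> A) \<and>
      (\<forall>k\<in>Jset n. x k = foldr min (map (\<lambda>(l, a). l + a k) cs) PInfty)}"

end

theory Submission
  imports Defs
begin

definition idxnum :: "idx \<Rightarrow> nat" where
  "idxnum v = (case v of Inl i \<Rightarrow> i | Inr i \<Rightarrow> i)"

definition selT :: "nat set \<Rightarrow> nat \<Rightarrow> idx" where
  "selT T i = (if i \<in> T then Inl i else Inr i)"

lemma idxnum_star[simp]: "idxnum (star v) = idxnum v"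
  by (cases v) (auto simp: idxnum_def)

lemma star_star[simp]: "star (star v) = v"
  by (cases v) auto

lemma star_neq[simp]: "star v \<noteq> v"
  by (cases v) auto

lemma star_neq2[simp]: "v \<noteq> star v"
  by (cases v) auto

lemma idxnum_selT[simp]: "idxnum (selT T i) = i"
  by (simp add: selT_def idxnum_def)

lemma selT_in_J: "i \<in> {1..n} \<Longrightarrow> selT T i \<in> Jset n"
  by (auto simp: selT_def Jset_def)

lemma star_in_J: "v \<in> Jset n \<Longrightarrow> star v \<in> Jset n"
  by (auto simp: Jset_def)

lemma J_num: "v \<in> Jset n \<Longrightarrow> idxnum v \<in> {1..n}"
  by (auto simp: Jset_def idxnum_def)

lemma J_cases: "v = selT T (idxnum v) \<or> v = star (selT T (idxnum v))"
  by (cases v) (auto simp: selT_def idxnum_def)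

lemma bar_iff: "v \<in> Jset n \<Longrightarrow> (v \<in> bar n T \<longleftrightarrow> v = selT T (idxnum v))"
  by (cases v) (auto simp: bar_def Jset_def selT_def idxnum_def)

lemma pbar_swap: "pbar p (sdiff (bar n T) {v, star v}) = p (sdiff T {idxnum v})"
proof -
  have "{i. Inl i \<in> sdiff (bar n T) {v, star v}} = sdiff T {idxnum v}"
    by (cases v) (auto simp: bar_def sdiff_def idxnum_def)
  then show ?thesis by (simp add: pbar_def)
qed

lemma selT_flip_same[simp]: "selT (sdiff T {m}) m = star (selT T m)"
  by (auto simp: selT_def sdiff_def)

lemma selT_flip_other: "i \<noteq> m \<Longrightarrow> selT (sdiff T {m}) i = selT T i"
  by (auto simp: selT_def sdiff_def)

lemma sdiff_sub: "T \<subseteq> {1..n} \<Longrightarrow> m \<in> {1..n} \<Longrightarrow> sdiff T {m} \<subseteq> {1..n}"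
  by (auto simp: sdiff_def)

lemma sdiff_twice[simp]: "sdiff (sdiff T {m}) {m} = T"
  by (auto simp: sdiff_def)

lemma sum_flip:
  fixes g :: "idx \<Rightarrow> real"
  assumes "m \<in> {1..n}"
  shows "(\<Sum>i\<in>{1..n}. g (selT (sdiff T {m}) i)) =
         (\<Sum>i\<in>{1..n}. g (selT T i)) - g (selT T m) + g (star (selT T m))"
proof -
  have "(\<Sum>i\<in>{1..n}. g (selT (sdiff T {m}) i)) =
        g (selT (sdiff T {m}) m) + (\<Sum>i\<in>{1..n} - {m}. g (selT (sdiff T {m}) i))"
    using assms by (simp add: sum.remove)
  also have "(\<Sum>i\<in>{1..n} - {m}. g (selT (sdiff T {m}) i)) = (\<Sum>i\<in>{1..n} - {m}. g (selT T i))"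
    by (rule sum.cong) (auto simp: selT_flip_other)
  also have "(\<Sum>i\<in>{1..n}. g (selT T i)) = g (selT T m) + (\<Sum>i\<in>{1..n} - {m}. g (selT T i))"
    using assms by (simp add: sum.remove)
  ultimately show ?thesis by simp
qed

lemma foldr_min_le:
  "(l, a) \<in> set cs \<Longrightarrow> foldr min (map (\<lambda>(l, a). l + a k) cs) PInfty \<le> l + a k"
  by (induction cs) (auto simp: min.coboundedI2)

lemma foldr_min_ge:
  "(\<forall>(l, a) \<in> set cs. y \<le> l + a k) \<Longrightarrow> y \<le> foldr min (map (\<lambda>(l, a). (l::ereal) + a k) cs) PInfty"
  by (induction cs) auto

theorem lemma6p8:
  fixes n :: nat and p :: "nat set \<Rightarrow> ereal" and x :: "idx \<Rightarrow> ereal"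
  assumes "trop_wick n p"
    and "\<exists>S \<subseteq> {1..n}. p S \<noteq> PInfty"
    and "x \<in> cocycle_space n p"
  shows "x \<in> trop_hull n (cocircuits n p)"
proof -
  define X where "X = supp n x"
  have xv: "trop_vec n x" and adm: "admissible X" and orth: "\<forall>c\<in>circuits n p. trop_orth n x c"
    using assms(3) by (auto simp: cocycle_space_def X_def)
  have pnm: "\<And>S. S \<subseteq> {1..n} \<Longrightarrow> p S \<noteq> MInfty" using assms(1) by (auto simp: trop_wick_def)
  have XJ: "X \<subseteq> Jset n" by (auto simp: X_def supp_def)
  have Xiff: "\<And>v. v \<in> Jset n \<Longrightarrow> v \<in> X \<longleftrightarrow> x v \<noteq> PInfty" by (auto simp: X_def supp_def)
  have xnm: "\<And>v. v \<in> Jset n \<Longrightarrow> x v \<noteq> MInfty" using xv by (auto simp: trop_vec_def)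
  have starX: "\<And>v. v \<in> X \<Longrightarrow> star v \<notin> X"
  proof
    fix v assume "v \<in> X" "star v \<in> X"
    then have "v \<in> star ` X" by (metis image_eqI star_star)
    then show False using adm \<open>v \<in> X\<close> unfolding admissible_def by blast
  qed
  define ind where "ind v = (if v \<in> X then 1 else (0::real))" for v
  define wt where "wt v = (if v \<in> X then real_of_ereal (x v) else 0)" for v
  define cnt where "cnt T = (\<Sum>i\<in>{1..n}. ind (selT T i))" for T
  define ws where "ws T = (\<Sum>i\<in>{1..n}. wt (selT T i))" for T
  define f where "f T = real_of_ereal (p T) - ws T" for T
  define C where "C = {T. T \<subseteq> {1..n} \<and> p T \<noteq> PInfty}"
  define LM where "LM T \<longleftrightarrow> T \<in> C \<and> (\<forall>T'\<in>C. cnt T \<le> cnt T') \<and>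
     (\<forall>T'\<in>C. cnt T' = cnt T \<longrightarrow> f T \<le> f T')" for T
  have cnt_flip: "cnt (sdiff T {m}) = cnt T - ind (selT T m) + ind (star (selT T m))"
    if "m \<in> {1..n}" for T m
    unfolding cnt_def using sum_flip[OF that] by blast
  have ws_flip: "ws (sdiff T {m}) = ws T - wt (selT T m) + wt (star (selT T m))"
    if "m \<in> {1..n}" for T m
    unfolding ws_def using sum_flip[OF that] by blast
  have pC: "\<And>T. T \<in> C \<Longrightarrow> p T = ereal (real_of_ereal (p T))"
  proof -
    fix T assume "T \<in> C"
    then have "p T \<noteq> PInfty" "p T \<noteq> MInfty" using pnm by (auto simp: C_def)
    then show "p T = ereal (real_of_ereal (p T))" by (cases "p T") auto
  qed
  have xX: "\<And>v. v \<in> X \<Longrightarrow> x v = ereal (real_of_ereal (x v))"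
  proof -
    fix v assume "v \<in> X"
    then have "x v \<noteq> PInfty" "x v \<noteq> MInfty" using Xiff xnm XJ by auto
    then show "x v = ereal (real_of_ereal (x v))" by (cases "x v") auto
  qed
  have finC: "finite C"
  proof (rule finite_subset)
    show "C \<subseteq> Pow {1..n}" by (auto simp: C_def)
  qed simp
  have neC: "C \<noteq> {}" using assms(2) by (auto simp: C_def)
  obtain T0 where LM0: "LM T0"
  proof -
    define c0 where "c0 = Min (cnt ` C)"
    define C0 where "C0 = {T\<in>C. cnt T = c0}"
    have "c0 \<in> cnt ` C" using finC neC by (simp add: c0_def)
    hence neC0: "C0 \<noteq> {}" by (auto simp: C0_def)
    have finC0: "finite C0" using finC by (simp add: C0_def)
    have "Min (f ` C0) \<in> f ` C0" using finC0 neC0 by simp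
    then obtain T0 where T0: "T0 \<in> C0" "f T0 = Min (f ` C0)" by auto
    have "LM T0" unfolding LM_def
    proof (intro conjI ballI impI)
      show "T0 \<in> C" using T0 by (simp add: C0_def)
      fix T' assume T'C: "T' \<in> C"
      show "cnt T0 \<le> cnt T'" using T0 T'C finC by (simp add: C0_def c0_def)
      assume "cnt T' = cnt T0"
      then have "T' \<in> C0" using T0 T'C by (simp add: C0_def)
      then show "f T0 \<le> f T'" using T0 finC0 by simp
    qed
    then show ?thesis using that by blast
  qed
  have step2: "\<exists>T. LM T \<and> selT T (idxnum k) = k" if kX: "k \<in> X" for k
  proof (cases "selT T0 (idxnum k) = k")
    case True then show ?thesis using LM0 by blast
  next
    case False
    define m where "m = idxnum k"
    have kJ: "k \<in> Jset n" using kX XJ by auto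
    have mJ: "m \<in> {1..n}" using J_num kJ m_def by auto
    have sk: "selT T0 m = star k" using False J_cases[of k T0] m_def by (metis star_star)
    define U where "U = sdiff T0 {m}"
    have T0C: "T0 \<in> C" using LM0 LM_def by blast
    have U_sub: "U \<subseteq> {1..n}" unfolding U_def by (rule sdiff_sub) (use T0C mJ in \<open>auto simp: C_def\<close>)
    have selUm: "selT U m = k" by (simp add: U_def sk)
    define c where "c = (\<lambda>j. circ n p U j + ereal 0)"
    have circk: "circ n p U k = p T0"
      using kJ selUm bar_iff[OF kJ, of U] by (simp add: circ_def pbar_swap U_def m_def[symmetric])
    have ck: "c k = p T0" by (simp add: c_def circk)
    have pT0: "p T0 \<noteq> PInfty" using T0C by (simp add: C_def)
    have "c \<in> circuits n p"
      unfolding circuits_def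
    proof (intro CollectI exI conjI)
      show "U \<subseteq> {1..n}" by (rule U_sub)
      show "c = (\<lambda>k. circ n p U k + ereal 0)" by (simp add: c_def)
      show "supp n c \<noteq> {}" using kJ ck pT0 by (auto simp: supp_def)
    qed
    then have "trop_orth n x c" using orth by blast
    then have mt: "min_twice (Jset n) (\<lambda>j. x j + c j)" by (simp add: trop_orth_def)
    obtain a where xka: "x k = ereal a" using xX[OF kX] by blast
    obtain r0 where r0: "p T0 = ereal r0" using pC[OF T0C] by blast
    have tk: "x k + c k = ereal (a + r0)" using xka ck r0 by simp
    have "\<not> (\<forall>i\<in>Jset n. x i + c i = PInfty)" using kJ tk by force
    then obtain a' b' where ab: "a' \<in> Jset n" "b' \<in> Jset n" "a' \<noteq> b'" "x a' + c a' = x b' + c b'"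
      "\<forall>k'\<in>Jset n. x a' + c a' \<le> x k' + c k'"
      using mt unfolding min_twice_def by blast
    obtain j where jJ: "j \<in> Jset n" and jk: "j \<noteq> k" and le0: "x j + c j \<le> x k + c k"
    proof (cases "a' = k")
      case True then show ?thesis using that[of b'] ab kJ by auto
    next
      case False then show ?thesis using that[of a'] ab kJ by auto
    qed
    have le: "x j + c j \<le> ereal (a + r0)" using le0 tk by simp
    have xjP: "x j \<noteq> PInfty" and cjP: "c j \<noteq> PInfty"
      using le by auto
    have jX: "j \<in> X" using xjP jJ Xiff by auto
    have jbar: "j \<in> bar n U" using cjP by (auto simp: c_def circ_def split: if_splits)
    define m' where "m' = idxnum j"
    have m'J: "m' \<in> {1..n}" using J_num jJ m'_def by auto
    have selUj: "selT U m' = j" using bar_iff[OF jJ] jbar m'_def by simp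
    have mm': "m' \<noteq> m" using selUj selUm jk by auto
    define T1 where "T1 = sdiff U {m'}"
    have cj: "c j = p T1" using jbar by (simp add: c_def circ_def pbar_swap T1_def m'_def)
    have T1sub: "T1 \<subseteq> {1..n}" unfolding T1_def by (rule sdiff_sub[OF U_sub m'J])
    have T1C: "T1 \<in> C" using cjP cj T1sub by (simp add: C_def)
    obtain r1 where r1: "p T1 = ereal r1" using pC[OF T1C] by blast
    obtain b where xjb: "x j = ereal b" using xX[OF jX] by blast
    have ineq: "b + r1 \<le> a + r0" using le xjb cj r1 by simp
    have selT1m: "selT T1 m = k" using selUm mm' by (simp add: T1_def selT_flip_other)
    have skX: "star k \<notin> X" "star j \<notin> X" using starX kX jX by auto
    have cntU: "cnt U = cnt T0 - ind (star k) + ind k" using cnt_flip[OF mJ, of T0] sk by (simp add: U_def)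
    have cntT1: "cnt T1 = cnt U - ind j + ind (star j)" using cnt_flip[OF m'J, of U] selUj by (simp add: T1_def)
    have cnteq: "cnt T1 = cnt T0" using cntU cntT1 skX kX jX by (simp add: ind_def)
    have wsU: "ws U = ws T0 - wt (star k) + wt k" using ws_flip[OF mJ, of T0] sk by (simp add: U_def)
    have wsT1: "ws T1 = ws U - wt j + wt (star j)" using ws_flip[OF m'J, of U] selUj by (simp add: T1_def)
    have wseq: "ws T1 = ws T0 + a - b" using wsU wsT1 skX kX jX xka xjb by (simp add: wt_def)
    have fle: "f T1 \<le> f T0" using wseq r0 r1 ineq by (simp add: f_def)
    have "LM T1" unfolding LM_def
    proof (intro conjI ballI impI)
      show "T1 \<in> C" by (rule T1C)
      fix T' assume T'C: "T' \<in> C"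
      show "cnt T1 \<le> cnt T'" using cnteq LM0 T'C by (simp add: LM_def)
      assume "cnt T' = cnt T1"
      then have "f T0 \<le> f T'" using cnteq LM0 T'C by (simp add: LM_def)
      then show "f T1 \<le> f T'" using fle by simp
    qed
    then show ?thesis using selT1m unfolding m_def by blast
  qed
  have step3: "\<exists>G \<in> cocircuits n p. (\<forall>j\<in>Jset n. x j \<le> G j) \<and> G k = x k" if kX: "k \<in> X" for k
  proof -
    obtain T where LMT: "LM T" and selk: "selT T (idxnum k) = k" using step2 kX by blast
    define m where "m = idxnum k"
    have kJ: "k \<in> Jset n" using kX XJ by auto
    have mJ: "m \<in> {1..n}" using J_num kJ m_def by auto
    have TC: "T \<in> C" using LMT LM_def by blast
    have Tsub: "T \<subseteq> {1..n}" using TC by (simp add: C_def)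
    define T2 where "T2 = sdiff T {m}"
    have T2sub: "T2 \<subseteq> {1..n}" unfolding T2_def by (rule sdiff_sub[OF Tsub mJ])
    obtain r where r: "p T = ereal r" using pC[OF TC] by blast
    obtain a where xka: "x k = ereal a" using xX[OF kX] by blast
    have selT2m: "selT T2 m = star k" using selk by (simp add: T2_def m_def)
    define G where "G = (\<lambda>j. cocirc n p T2 j + ereal (a - r))"
    have knb: "k \<notin> bar n T2" using bar_iff[OF kJ] selT2m m_def by auto
    have Gk: "G k = x k" using knb r xka by (simp add: G_def cocirc_def pbar_swap T2_def m_def[symmetric])
    have Gge: "x j \<le> G j" if jJ: "j \<in> Jset n" for j
    proof (cases "j \<in> bar n T2")
      case True then show ?thesis by (simp add: G_def cocirc_def)
    next
      case False
      hence Gj: "G j = p (sdiff T2 {idxnum j}) + ereal (a - r)"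
        by (simp add: G_def cocirc_def pbar_swap)
      have jne: "j \<noteq> selT T2 (idxnum j)" using False bar_iff[OF jJ] by simp
      show ?thesis
      proof (cases "idxnum j = m")
        case True
        then have "j = k" using jne selT2m J_cases[of j T] selk m_def by auto
        then show ?thesis using Gk by simp
      next
        case False
        define m' where "m' = idxnum j"
        have m'J: "m' \<in> {1..n}" using J_num jJ m'_def by auto
        have sj: "selT T2 m' = star j" using jne J_cases[of j T2] m'_def by (metis star_star)
        have sjT: "selT T m' = star j" using sj False by (simp add: T2_def selT_flip_other m'_def)
        define T3 where "T3 = sdiff T2 {m'}"
        show ?thesis
        proof (cases "p T3 = PInfty")
          case True then show ?thesis using Gj by (simp add: T3_def m'_def)
        next
          case False
          have T3sub: "T3 \<subseteq> {1..n}" unfolding T3_def by (rule sdiff_sub[OF T2sub m'J])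
          have T3C: "T3 \<in> C" using False T3sub by (simp add: C_def)
          obtain r3 where r3: "p T3 = ereal r3" using pC[OF T3C] by blast
          have cntT2: "cnt T2 = cnt T - ind k + ind (star k)" using cnt_flip[OF mJ, of T] selk
            by (simp add: T2_def m_def)
          have cntT3: "cnt T3 = cnt T2 - ind (star j) + ind j" using cnt_flip[OF m'J, of T2] sj
            by (simp add: T3_def)
          have skX: "star k \<notin> X" using starX kX by auto
          have cmin: "cnt T \<le> cnt T3" using LMT T3C by (simp add: LM_def)
          have jX: "j \<in> X"
          proof (rule ccontr)
            assume "j \<notin> X"
            then have "cnt T3 = cnt T - 1 - ind (star j)" using cntT2 cntT3 kX skX by (simp add: ind_def)
            moreover have "ind (star j) \<ge> 0" by (simp add: ind_def)
            ultimately show False using cmin by simp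
          qed
          have sjX: "star j \<notin> X" using starX jX by auto
          have "cnt T3 = cnt T" using cntT2 cntT3 kX skX jX sjX by (simp add: ind_def)
          then have fle: "f T \<le> f T3" using LMT T3C by (simp add: LM_def)
          obtain b where xjb: "x j = ereal b" using xX[OF jX] by blast
          have wsT2: "ws T2 = ws T - wt k + wt (star k)" using ws_flip[OF mJ, of T] selk
            by (simp add: T2_def m_def)
          have wsT3: "ws T3 = ws T2 - wt (star j) + wt j" using ws_flip[OF m'J, of T2] sj
            by (simp add: T3_def)
          have "ws T3 = ws T - a + b" using wsT2 wsT3 kX skX jX sjX xka xjb by (simp add: wt_def)
          then have "b \<le> r3 + (a - r)" using fle r r3 by (simp add: f_def)
          moreover have "G j = ereal (r3 + (a - r))" using Gj r3 by (simp add: T3_def m'_def)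
          ultimately show ?thesis using xjb by simp
        qed
      qed
    qed
    have "G \<in> cocircuits n p"
      unfolding cocircuits_def
    proof (intro CollectI exI conjI)
      show "T2 \<subseteq> {1..n}" by (rule T2sub)
      show "G = (\<lambda>k. cocirc n p T2 k + ereal (a - r))" by (simp add: G_def)
      show "supp n G \<noteq> {}" using kJ Gk xka by (auto simp: supp_def)
    qed
    then show ?thesis using Gge Gk by blast
  qed
  obtain GG where GG: "\<forall>k\<in>X. GG k \<in> cocircuits n p \<and> (\<forall>j\<in>Jset n. x j \<le> GG k j) \<and> GG k k = x k"
  proof -
    have "\<forall>k\<in>X. \<exists>G. G \<in> cocircuits n p \<and> (\<forall>j\<in>Jset n. x j \<le> G j) \<and> G k = x k"
      using step3 by blast
    then show ?thesis using that by (metis (no_types, lifting) bchoice)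
  qed
  have finX: "finite X" using XJ by (rule finite_subset) (simp add: Jset_def)
  obtain xs where xs: "set xs = X" using finite_list[OF finX] by blast
  define cs where "cs = map (\<lambda>k. (0::ereal, GG k)) xs"
  show ?thesis
    unfolding trop_hull_def
  proof (intro CollectI exI conjI ballI)
    show "\<And>la. la \<in> set cs \<Longrightarrow> (case la of (l, a) \<Rightarrow> l \<noteq> MInfty \<and> a \<in> cocircuits n p)"
      using GG xs by (auto simp: cs_def)
    fix k assume kJ: "k \<in> Jset n"
    have ge: "x k \<le> foldr min (map (\<lambda>(l, a). l + a k) cs) PInfty"
      by (rule foldr_min_ge) (use GG xs kJ in \<open>auto simp: cs_def\<close>)
    have le: "foldr min (map (\<lambda>(l, a). l + a k) cs) PInfty \<le> x k"
    proof (cases "k \<in> X")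
      case True
      then have "(0, GG k) \<in> set cs" using xs by (auto simp: cs_def)
      from foldr_min_le[OF this, of k] show ?thesis using GG True by simp
    next
      case False
      then have "x k = PInfty" using Xiff kJ by auto
      then show ?thesis by simp
    qed
    show "x k = foldr min (map (\<lambda>(l, a). l + a k) cs) PInfty" using ge le by (rule antisym)
  qed
qed

end
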